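(* Let $K$ be a simplicial complex on the vertex set $[m]$, and let $A$ be a subgroup of $\mathbb{Z}_2^m$. Then the fixed point sets satisfy $(\mathbb{R}\mathcal{Z}_K)^A=(\mathbb{R}\mathcal{Z}_K)^{\operatorname{hull}(A)}$.
   Context: $\mathbb{R}\mathcal{Z}_K=\bigcup_{\sigma\in K}\{x\in[-1,1]^m: x_i\in\{\pm1\}\text{ for } i\notin\sigma\}$, with $\mathbb{Z}_2^m=\{\pm1\}^m$ acting by coordinatewise sign change. The coordinate hull $\operatorname{hull}(A)$ is the smallest coordinate subgroup containing $A$: $\operatorname{hull}(A)=\mathbb{Z}_2^I=\{x\in\mathbb{Z}_2^m: x_i=1\text{ for } i\notin I\}$ with $I=\{i\in[m]:\mathrm{proj}_i(A)\neq\{1\}\}$, $\mathrm{proj}_i$ the $i$-th coordinate projection. *)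

theory Defs
  imports Main "HOL.Real"
begin

text \<open>Vertex set [m] is encoded as {..<m} = {0,...,m-1}. Points of [-1,1]^m are
  functions nat => real vanishing outside {..<m}; elements of Z_2^m = {+-1}^m are
  functions nat => real with values +-1 on {..<m} and 1 outside.\<close>

definition cube :: "nat \<Rightarrow> (nat \<Rightarrow> real) set" where
  "cube m = {x. (\<forall>i<m. -1 \<le> x i \<and> x i \<le> 1) \<and> (\<forall>i\<ge>m. x i = 0)}"

definition Z2m :: "nat \<Rightarrow> (nat \<Rightarrow> real) set" where
  "Z2m m = {g. (\<forall>i<m. g i = 1 \<or> g i = -1) \<and> (\<forall>i\<ge>m. g i = 1)}"

definition act :: "(nat \<Rightarrow> real) \<Rightarrow> (nat \<Rightarrow> real) \<Rightarrow> (nat \<Rightarrow> real)" where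
  "act g x = (\<lambda>i. g i * x i)"

definition is_subgroup_Z2m :: "nat \<Rightarrow> (nat \<Rightarrow> real) set \<Rightarrow> bool" where
  "is_subgroup_Z2m m A \<longleftrightarrow> A \<subseteq> Z2m m \<and> (\<lambda>i. 1) \<in> A
     \<and> (\<forall>g\<in>A. \<forall>h\<in>A. (\<lambda>i. g i * h i) \<in> A)
     \<and> (\<forall>g\<in>A. (\<lambda>i. inverse (g i)) \<in> A)"

definition simplicial_complex :: "nat \<Rightarrow> nat set set \<Rightarrow> bool" where
  "simplicial_complex m K \<longleftrightarrow> (\<forall>\<sigma>\<in>K. \<sigma> \<subseteq> {..<m}) \<and> {} \<in> K
     \<and> (\<forall>\<sigma>\<in>K. \<forall>\<tau>. \<tau> \<subseteq> \<sigma> \<longrightarrow> \<tau> \<in> K)"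

definition real_moment_angle :: "nat \<Rightarrow> nat set set \<Rightarrow> (nat \<Rightarrow> real) set" where
  "real_moment_angle m K =
     (\<Union>\<sigma>\<in>K. {x \<in> cube m. \<forall>i<m. i \<notin> \<sigma> \<longrightarrow> x i = 1 \<or> x i = -1})"

definition coord_subgroup :: "nat \<Rightarrow> nat set \<Rightarrow> (nat \<Rightarrow> real) set" where
  "coord_subgroup m I = {g \<in> Z2m m. \<forall>i<m. i \<notin> I \<longrightarrow> g i = 1}"

definition coord_hull :: "nat \<Rightarrow> (nat \<Rightarrow> real) set \<Rightarrow> (nat \<Rightarrow> real) set" where
  "coord_hull m A = coord_subgroup m {i. i < m \<and> (\<lambda>g. g i) ` A \<noteq> {1}}"

definition fixed_points ::
  "(nat \<Rightarrow> real) set \<Rightarrow> (nat \<Rightarrow> real) set \<Rightarrow> (nat \<Rightarrow> real) set" where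
  "fixed_points A X = {x \<in> X. \<forall>g\<in>A. act g x = x}"

end

theory Submission
  imports Defs
begin

theorem lemma3p3:
  fixes m :: nat and K :: "nat set set" and A :: "(nat \<Rightarrow> real) set"
  assumes "simplicial_complex m K"
    and "is_subgroup_Z2m m A"
  shows "fixed_points A (real_moment_angle m K) = fixed_points (coord_hull m A) (real_moment_angle m K)"
proof -
  have AZ: "A \<subseteq> Z2m m" and one: "(\<lambda>i. 1) \<in> A"
    using assms(2) unfolding is_subgroup_Z2m_def by auto
  have sub: "A \<subseteq> coord_hull m A"
  proof
    fix g assume g: "g \<in> A"
    have "g \<in> Z2m m" using g AZ by auto
    moreover have "g i = 1" if "i < m" "i \<notin> {i. i < m \<and> (\<lambda>g. g i) ` A \<noteq> {1}}" for i
      using that g one by auto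
    ultimately show "g \<in> coord_hull m A"
      unfolding coord_hull_def coord_subgroup_def by auto
  qed
  have key: "act h x = x" if x: "\<forall>g\<in>A. act g x = x" and h: "h \<in> coord_hull m A" for x h
  proof
    fix i
    show "act h x i = x i"
    proof (cases "i < m \<and> (\<lambda>g. g i) ` A \<noteq> {1}")
      case True
      have "\<exists>g\<in>A. g i \<noteq> 1"
      proof (rule ccontr)
        assume "\<not> (\<exists>g\<in>A. g i \<noteq> 1)"
        then have "(\<lambda>g. g i) ` A = {1}" using one by force
        then show False using True by simp
      qed
      then obtain g where g: "g \<in> A" "g i \<noteq> 1" by blast
      then have "g i = -1" using AZ True unfolding Z2m_def by auto
      moreover have "g i * x i = x i" using x g unfolding act_def by metis
      ultimately have "x i = 0" by simp
      then show ?thesis unfolding act_def by simp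
    next
      case False
      then have "h i = 1" using h unfolding coord_hull_def coord_subgroup_def Z2m_def
        by (cases "i < m") auto
      then show ?thesis unfolding act_def by simp
    qed
  qed
  show ?thesis
    unfolding fixed_points_def using sub key by blast
qed

end
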